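(* Let $k$ be an algebraically closed field of characteristic $0$, $d\ge3$, $n\ge1$, and let $V_n$ have basis $v_1,\dots,v_n$ with symmetric $d$-linear form $\Theta_d(v_{i_1},\dots,v_{i_d})=1$ if $i_1+\dots+i_d=(d-1)n+1$ and $0$ otherwise. Then the center $\mathrm{Cent}_k(V_n,\Theta_d)=\{f\in\mathrm{End}_k(V_n):\Theta_d(fu_1,u_2,\dots,u_d)=\Theta_d(u_1,fu_2,\dots,u_d)\ \forall u_i\}$ is a maximal commutative subalgebra of $\mathrm{End}_k(V_n)$.
   Context: The map $\psi(v_i)=v_{i-1}$ ($v_0=0$) belongs to the center, and the center equals $k[\psi]$. *)

theory Defs
  imports "HOL-Computational_Algebra.Polynomial" "HOL-Library.FuncSet"
begin

text \<open>V_n is modelled as functions nat => 'a supported on {1..n}; coordinate i is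
  the coefficient of the basis vector v_i.\<close>

definition vecs :: "nat \<Rightarrow> (nat \<Rightarrow> 'a::field) set" where
  "vecs n = {v. \<forall>i. i \<notin> {1..n} \<longrightarrow> v i = 0}"

definition mats :: "nat \<Rightarrow> (nat \<Rightarrow> nat \<Rightarrow> 'a::field) set" where
  "mats n = {M. \<forall>i j. (i \<notin> {1..n} \<or> j \<notin> {1..n}) \<longrightarrow> M i j = 0}"

definition mapply :: "nat \<Rightarrow> (nat \<Rightarrow> nat \<Rightarrow> 'a::field) \<Rightarrow> (nat \<Rightarrow> 'a) \<Rightarrow> (nat \<Rightarrow> 'a)" where
  "mapply n M v = (\<lambda>i. if i \<in> {1..n} then (\<Sum>j=1..n. M i j * v j) else 0)"

definition mmult :: "nat \<Rightarrow> (nat \<Rightarrow> nat \<Rightarrow> 'a::field) \<Rightarrow> (nat \<Rightarrow> nat \<Rightarrow> 'a) \<Rightarrow> (nat \<Rightarrow> nat \<Rightarrow> 'a)" where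
  "mmult n A B = (\<lambda>i k. if i \<in> {1..n} \<and> k \<in> {1..n} then (\<Sum>j=1..n. A i j * B j k) else 0)"

definition mone :: "nat \<Rightarrow> (nat \<Rightarrow> nat \<Rightarrow> 'a::field)" where
  "mone n = (\<lambda>i j. if i = j \<and> i \<in> {1..n} then 1 else 0)"

text \<open>The symmetric d-linear form Theta_d, extended multilinearly from its values on
  basis vectors: Theta_d(v_{i_1},...,v_{i_d}) = 1 iff i_1+...+i_d = (d-1)n+1.
  Arguments are indexed u 0, ..., u (d-1).\<close>

definition Theta :: "nat \<Rightarrow> nat \<Rightarrow> (nat \<Rightarrow> nat \<Rightarrow> 'a::field) \<Rightarrow> 'a" where
  "Theta d n u = (\<Sum>idx \<in> {idx \<in> Pi\<^sub>E {..<d} (\<lambda>_. {1..n}). (\<Sum>j<d. idx j) = (d - 1) * n + 1}.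
                    \<Prod>j<d. u j (idx j))"

definition centre :: "nat \<Rightarrow> nat \<Rightarrow> (nat \<Rightarrow> nat \<Rightarrow> 'a::field) set" where
  "centre d n = {f \<in> mats n. \<forall>u. (\<forall>j<d. u j \<in> vecs n) \<longrightarrow>
       Theta d n (u(0 := mapply n f (u 0))) = Theta d n (u(1 := mapply n f (u 1)))}"

definition subalgebra :: "nat \<Rightarrow> (nat \<Rightarrow> nat \<Rightarrow> 'a::field) set \<Rightarrow> bool" where
  "subalgebra n A \<longleftrightarrow> A \<subseteq> mats n \<and> mone n \<in> A
     \<and> (\<forall>a\<in>A. \<forall>b\<in>A. (\<lambda>i j. a i j + b i j) \<in> A)
     \<and> (\<forall>c. \<forall>a\<in>A. (\<lambda>i j. c * a i j) \<in> A)
     \<and> (\<forall>a\<in>A. \<forall>b\<in>A. mmult n a b \<in> A)"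

definition commutative_set :: "nat \<Rightarrow> (nat \<Rightarrow> nat \<Rightarrow> 'a::field) set \<Rightarrow> bool" where
  "commutative_set n A \<longleftrightarrow> (\<forall>a\<in>A. \<forall>b\<in>A. mmult n a b = mmult n b a)"

definition maximal_comm_subalgebra :: "nat \<Rightarrow> (nat \<Rightarrow> nat \<Rightarrow> 'a::field) set \<Rightarrow> bool" where
  "maximal_comm_subalgebra n A \<longleftrightarrow> subalgebra n A \<and> commutative_set n A
     \<and> (\<forall>B. subalgebra n B \<and> commutative_set n B \<and> A \<subseteq> B \<longrightarrow> B = A)"

end

theory Submission
  imports Defs
begin

definition tmat :: "nat \<Rightarrow> (nat \<Rightarrow> 'a::field) \<Rightarrow> nat \<Rightarrow> nat \<Rightarrow> 'a" where
  "tmat n c = (\<lambda>i j. if i \<in> {1..n} \<and> j \<in> {1..n} \<and> i \<le> j then c (j - i) else 0)"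

definition ThetaM :: "nat \<Rightarrow> nat \<Rightarrow> nat \<Rightarrow> (nat \<Rightarrow> nat \<Rightarrow> 'a::field) \<Rightarrow> 'a" where
  "ThetaM d n m u = (\<Sum>idx \<in> {idx \<in> Pi\<^sub>E {..<d} (\<lambda>_. {1..n}). (\<Sum>j<d. idx j) = m}.
                    \<Prod>j<d. u j (idx j))"

definition sh :: "nat \<Rightarrow> nat \<Rightarrow> (nat \<Rightarrow> 'a::field) \<Rightarrow> nat \<Rightarrow> 'a" where
  "sh n t w = (\<lambda>a. if a \<in> {1..n} \<and> a + t \<le> n then w (a + t) else 0)"

lemma Theta_M: "Theta d n u = ThetaM d n ((d-1)*n+1) u"
  by (simp add: Theta_def ThetaM_def)

lemma prod_upd:
  assumes "k < (d::nat)"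
  shows "(\<Prod>j<d. (u(k:=w)) j (idx j)) = (w (idx k) :: 'a::field) * (\<Prod>j\<in>{..<d}-{k}. u j (idx j))"
proof -
  have "(\<Prod>j<d. (u(k:=w)) j (idx j)) = (u(k:=w)) k (idx k) * (\<Prod>j\<in>{..<d}-{k}. (u(k:=w)) j (idx j))"
    by (rule prod.remove) (use assms in auto)
  also have "(\<Prod>j\<in>{..<d}-{k}. (u(k:=w)) j (idx j)) = (\<Prod>j\<in>{..<d}-{k}. u j (idx j))"
    by (rule prod.cong) auto
  finally show ?thesis by simp
qed

lemma prod_k:
  assumes "k < (d::nat)"
  shows "(\<Prod>j<d. u j (idx j)) = (u k (idx k) :: 'a::field) * (\<Prod>j\<in>{..<d}-{k}. u j (idx j))"
  using prod_upd[OF assms, of u "u k" idx] by simp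

lemma sum_k:
  assumes "k < (d::nat)"
  shows "(\<Sum>j<d. (f::nat\<Rightarrow>nat) j) = f k + (\<Sum>j\<in>{..<d}-{k}. f j)"
  using sum.remove[of "{..<d}" k] assms by simp

lemma sum_upd:
  assumes "k < (d::nat)"
  shows "(\<Sum>j<d. (f(k:=x)) j) = x + (\<Sum>j\<in>{..<d}-{k}. (f::nat\<Rightarrow>nat) j)"
proof -
  have "(\<Sum>j<d. (f(k:=x)) j) = x + (\<Sum>j\<in>{..<d}-{k}. (f(k:=x)) j)"
    using sum_k[OF assms, of "f(k:=x)"] by simp
  also have "(\<Sum>j\<in>{..<d}-{k}. (f(k:=x)) j) = (\<Sum>j\<in>{..<d}-{k}. f j)"
    by (rule sum.cong) auto
  finally show ?thesis .
qed

lemma lin: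
  assumes "k < (d::nat)" "finite T"
  shows "ThetaM d n m (u(k := \<lambda>a. \<Sum>t\<in>T. c t * g t a)) = (\<Sum>t\<in>T. (c t :: 'a::field) * ThetaM d n m (u(k := g t)))"
  unfolding ThetaM_def prod_upd[OF assms(1)]
  by (simp add: sum_distrib_left sum_distrib_right mult.assoc) (rule sum.swap)

lemma rest_bound:
  assumes "idx \<in> Pi\<^sub>E {..<d} (\<lambda>_. {1..n})" "k < d"
  shows "(\<Sum>j\<in>{..<d}-{k}. idx j) \<le> (d-1)*(n::nat)"
proof -
  have "(\<Sum>j\<in>{..<d}-{k}. idx j) \<le> of_nat (card ({..<d}-{k})) * n"
    using assms by (intro sum_bounded_above) auto
  also have "card ({..<d}-{k}) = d - 1" using assms by simp
  finally show ?thesis by simp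
qed

lemma upd_PiE:
  assumes "f \<in> Pi\<^sub>E A B" "k \<in> A" "x \<in> B k"
  shows "f(k := x) \<in> Pi\<^sub>E A B"
  using PiE_fun_upd[OF assms(3,1)] assms(2) by (simp add: insert_absorb)

lemma shift:
  assumes "k < (d::nat)"
  shows "ThetaM d n ((d-1)*n+1) (u(k := sh n t (u k))) = ThetaM d n ((d-1)*n+1+t) (u::nat \<Rightarrow> nat \<Rightarrow> 'a::field)"
proof -
  define N where "N = (d-1)*n+1"
  define R where "R = (\<lambda>idx. \<Prod>j\<in>{..<d}-{k}. u j (idx j))"
  define S where "S = (\<lambda>m. {idx \<in> Pi\<^sub>E {..<d} (\<lambda>_. {1..n}). (\<Sum>j<d. idx j) = m})"
  have fin: "finite (S m)" for m unfolding S_def by (auto intro!: finite_PiE)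
  have "ThetaM d n N (u(k := sh n t (u k))) = (\<Sum>idx\<in>S N. sh n t (u k) (idx k) * R idx)"
    unfolding ThetaM_def prod_upd[OF assms] S_def R_def ..
  also have "\<dots> = (\<Sum>idx\<in>S N. if idx k + t \<le> n then u k (idx k + t) * R idx else 0)"
    by (rule sum.cong) (use assms in \<open>auto simp: S_def sh_def PiE_iff\<close>)
  also have "\<dots> = (\<Sum>idx\<in>{idx\<in>S N. idx k + t \<le> n}. u k (idx k + t) * R idx)"
    by (rule sum.inter_filter[symmetric, OF fin])
  also have "\<dots> = (\<Sum>idx\<in>S (N+t). u k (idx k) * R idx)"
  proof (rule sum.reindex_bij_witness[where j="\<lambda>idx. idx(k := idx k + t)" and i="\<lambda>idx. idx(k := idx k - t)"])
    fix a assume a: "a \<in> {idx\<in>S N. idx k + t \<le> n}"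
    show "(a(k := a k + t))(k := (a(k := a k + t)) k - t) = a" by simp
    have ak: "a k \<in> {1..n}" using a assms by (auto simp: S_def PiE_iff)
    have aP: "a \<in> Pi\<^sub>E {..<d} (\<lambda>_. {1..n})" and as: "(\<Sum>j<d. a j) = N" and akt: "a k + t \<le> n"
      using a by (auto simp: S_def)
    have "a(k := a k + t) \<in> Pi\<^sub>E {..<d} (\<lambda>_. {1..n})"
      by (rule upd_PiE[OF aP]) (use assms ak akt in auto)
    moreover have "(\<Sum>j<d. (a(k := a k + t)) j) = N + t"
      using as sum_k[OF assms, of a] unfolding sum_upd[OF assms] by linarith
    ultimately show "a(k := a k + t) \<in> S (N+t)" by (simp add: S_def)
    have "R (a(k := a k + t)) = R a" unfolding R_def by (rule prod.cong) auto
    then show "u k ((a(k := a k + t)) k) * R (a(k := a k + t)) = u k (a k + t) * R a" by simp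
  next
    fix b assume b: "b \<in> S (N+t)"
    have bP: "b \<in> Pi\<^sub>E {..<d} (\<lambda>_. {1..n})" and bs: "(\<Sum>j<d. b j) = N + t" using b by (auto simp: S_def)
    have "b k \<le> n" using bP assms by (auto simp: PiE_iff)
    have "(\<Sum>j\<in>{..<d}-{k}. b j) \<le> (d-1)*n" by (rule rest_bound[OF bP assms])
    with bs sum_k[OF assms, of b] have bk: "b k \<ge> t + 1" unfolding N_def by linarith
    show "(b(k := b k - t))(k := (b(k := b k - t)) k + t) = b" using bk by auto
    have "b(k := b k - t) \<in> Pi\<^sub>E {..<d} (\<lambda>_. {1..n})"
      by (rule upd_PiE[OF bP]) (use assms bk \<open>b k \<le> n\<close> in auto)
    moreover have "(\<Sum>j<d. (b(k := b k - t)) j) = N"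
      using bs bk sum_k[OF assms, of b] unfolding sum_upd[OF assms] by linarith
    ultimately show "b(k := b k - t) \<in> {idx\<in>S N. idx k + t \<le> n}" using bk \<open>b k \<le> n\<close> by (simp add: S_def)
  qed
  also have "\<dots> = ThetaM d n (N+t) u"
    unfolding ThetaM_def prod_k[OF assms] S_def R_def ..
  finally show ?thesis unfolding N_def .
qed


lemma mapply_tmat:
  "mapply n (tmat n c) w = (\<lambda>a. \<Sum>t<n. (c t :: 'a::field) * sh n t w a)"
proof
  fix a
  show "mapply n (tmat n c) w a = (\<Sum>t<n. c t * sh n t w a)"
  proof (cases "a \<in> {1..n}")
    case False
    then show ?thesis by (auto simp: mapply_def sh_def)
  next
    case True
    have "mapply n (tmat n c) w a = (\<Sum>j\<in>{1..n}. if a \<le> j then c (j - a) * w j else 0)"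
      using True by (auto simp: mapply_def tmat_def intro!: sum.cong)
    also have "\<dots> = (\<Sum>j\<in>{j\<in>{1..n}. a \<le> j}. c (j - a) * w j)"
      by (rule sum.inter_filter[symmetric]) simp
    also have "\<dots> = (\<Sum>t\<in>{t\<in>{..<n}. a + t \<le> n}. c t * w (a + t))"
      by (rule sum.reindex_bij_witness[where j="\<lambda>j. j - a" and i="\<lambda>t. a + t"]) (use True in auto)
    also have "\<dots> = (\<Sum>t<n. if a + t \<le> n then c t * w (a + t) else 0)"
      by (rule sum.inter_filter) simp
    also have "\<dots> = (\<Sum>t<n. c t * sh n t w a)"
      by (rule sum.cong) (use True in \<open>auto simp: sh_def\<close>)
    finally show ?thesis .
  qed
qed

lemma tmat_in_centre:
  assumes "d \<ge> 2"
  shows "tmat n c \<in> centre d n"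
proof -
  have "tmat n c \<in> mats n" by (simp add: mats_def tmat_def)
  moreover have "Theta d n (u(0 := mapply n (tmat n c) (u 0))) = Theta d n (u(1 := mapply n (tmat n c) (u 1)))"
    for u :: "nat \<Rightarrow> nat \<Rightarrow> 'a"
  proof -
    have "Theta d n (u(k := mapply n (tmat n c) (u k))) = (\<Sum>t<n. c t * ThetaM d n ((d-1)*n+1+t) u)"
      if "k < d" for k
      unfolding Theta_M mapply_tmat lin[OF that finite_lessThan] shift[OF that] ..
    from this[of 0] this[of 1] assms show ?thesis by simp
  qed
  ultimately show ?thesis by (simp add: centre_def)
qed

definition e :: "nat \<Rightarrow> nat \<Rightarrow> 'a::field" where
  "e a = (\<lambda>i. if i = a then 1 else 0)"

lemma prod_ind:
  assumes "finite A"
  shows "(\<Prod>j\<in>A. if (x::nat\<Rightarrow>nat) j = p j then 1 else 0) = (if \<forall>j\<in>A. x j = p j then 1 else (0::'a::field))"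
proof (cases "\<forall>j\<in>A. x j = p j")
  case True then show ?thesis by simp
next
  case False
  then obtain j where "j \<in> A" "x j \<noteq> p j" by auto
  then show ?thesis using assms False by (subst prod_zero) auto
qed

lemma eval:
  assumes k: "k < d" and u: "\<And>j. j < d \<Longrightarrow> j \<noteq> k \<Longrightarrow> u j = e (p j)"
    and p: "\<And>j. j < d \<Longrightarrow> j \<noteq> k \<Longrightarrow> p j \<in> {1..n}"
  shows "ThetaM d n m u = (\<Sum>t\<in>{1..n}. if (\<Sum>j\<in>{..<d}-{k}. p j) + t = m then u k t else (0::'a::field))"
proof -
  define S where "S = {idx \<in> Pi\<^sub>E {..<d} (\<lambda>_. {1..n}). (\<Sum>j<d. idx j) = m}"
  have fin: "finite S" unfolding S_def by (auto intro!: finite_PiE)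
  have "ThetaM d n m u = (\<Sum>idx\<in>S. u k (idx k) * (\<Prod>j\<in>{..<d}-{k}. u j (idx j)))"
    unfolding ThetaM_def prod_k[OF k] S_def ..
  also have "\<dots> = (\<Sum>idx\<in>S. if \<forall>j\<in>{..<d}-{k}. idx j = p j then u k (idx k) else 0)"
  proof (rule sum.cong[OF refl])
    fix idx
    have "(\<Prod>j\<in>{..<d}-{k}. u j (idx j)) = (\<Prod>j\<in>{..<d}-{k}. if idx j = p j then 1 else 0)"
      by (rule prod.cong) (auto simp: u e_def)
    then show "u k (idx k) * (\<Prod>j\<in>{..<d}-{k}. u j (idx j)) = (if \<forall>j\<in>{..<d}-{k}. idx j = p j then u k (idx k) else 0)"
      by (simp add: prod_ind)
  qed
  also have "\<dots> = (\<Sum>idx\<in>{idx\<in>S. \<forall>j\<in>{..<d}-{k}. idx j = p j}. u k (idx k))"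
    by (rule sum.inter_filter[symmetric, OF fin])
  also have "\<dots> = (\<Sum>t\<in>{t\<in>{1..n}. (\<Sum>j\<in>{..<d}-{k}. p j) + t = m}. u k t)"
  proof (rule sum.reindex_bij_witness[where j="\<lambda>idx. idx k" and i="\<lambda>t j. if j < d then (if j = k then t else p j) else undefined"])
    fix a assume a: "a \<in> {idx\<in>S. \<forall>j\<in>{..<d}-{k}. idx j = p j}"
    then have aP: "a \<in> Pi\<^sub>E {..<d} (\<lambda>_. {1..n})" and as: "(\<Sum>j<d. a j) = m"
      and ap: "\<And>j. j < d \<Longrightarrow> j \<noteq> k \<Longrightarrow> a j = p j" by (auto simp: S_def)
    show "(\<lambda>j. if j < d then (if j = k then a k else p j) else undefined) = a"
    proof
      fix j show "(if j < d then (if j = k then a k else p j) else undefined) = a j"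
        using aP ap by (auto simp: PiE_iff extensional_def)
    qed
    have "(\<Sum>j\<in>{..<d}-{k}. a j) = (\<Sum>j\<in>{..<d}-{k}. p j)" by (rule sum.cong) (auto simp: ap)
    then show "a k \<in> {t\<in>{1..n}. (\<Sum>j\<in>{..<d}-{k}. p j) + t = m}"
      using as sum_k[OF k, of a] aP k by (auto simp: PiE_iff)
  next
    fix b assume b: "b \<in> {t\<in>{1..n}. (\<Sum>j\<in>{..<d}-{k}. p j) + t = m}"
    define f where "f = (\<lambda>j. if j < d then (if j = k then b else p j) else undefined)"
    show "f k = b" using k by (simp add: f_def)
    have "f \<in> Pi\<^sub>E {..<d} (\<lambda>_. {1..n})" using b p by (auto simp: f_def PiE_iff extensional_def)
    moreover have "(\<Sum>j\<in>{..<d}-{k}. f j) = (\<Sum>j\<in>{..<d}-{k}. p j)" by (rule sum.cong) (auto simp: f_def)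
    moreover have "f k = b" using k by (simp add: f_def)
    ultimately show "f \<in> {idx\<in>S. \<forall>j\<in>{..<d}-{k}. idx j = p j}"
      using b sum_k[OF k, of f] by (auto simp: S_def f_def)
  qed auto
  also have "\<dots> = (\<Sum>t\<in>{1..n}. if (\<Sum>j\<in>{..<d}-{k}. p j) + t = m then u k t else 0)"
    by (rule sum.inter_filter) simp
  finally show ?thesis .
qed

lemma sum_pick:
  "(\<Sum>t\<in>{1..n}. if s + t = (N::nat) then g t else (0::'a::field)) = (if s < N \<and> N - s \<le> n then g (N - s) else 0)"
proof -
  have "(\<Sum>t\<in>{1..n}. if s + t = (N::nat) then g t else (0::'a::field)) =
        (\<Sum>t\<in>{1..n}. if t = N - s then (if s < N then g t else 0) else 0)"
    by (rule sum.cong) auto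
  also have "\<dots> = (if s < N \<and> N - s \<le> n then g (N - s) else 0)" by auto
  finally show ?thesis .
qed


lemma mapply_e:
  assumes "i \<in> {1..n}" "t \<in> {1..n}"
  shows "mapply n f (e i) t = (f t i :: 'a::field)"
proof -
  have "mapply n f (e i) t = (\<Sum>j\<in>{1..n}. if j = i then f t j else 0)"
    using assms(2) by (simp add: mapply_def e_def if_distrib cong: if_cong)
  then show ?thesis using assms(1) by simp
qed

lemma e_vecs: "a \<in> {1..n} \<Longrightarrow> e a \<in> vecs n"
  by (auto simp: e_def vecs_def)

lemma sum_split3:
  assumes "d \<ge> 3" "k \<in> {0,1::nat}"
  shows "(\<Sum>j\<in>{..<d}-{k}. p j) = p (1 - k) + p 2 + (\<Sum>j\<in>{3..<d}. (p j::nat))"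
proof -
  have "{..<d}-{k} = insert (1-k) (insert 2 {3..<d})" using assms by auto
  moreover have "1 - k \<notin> insert 2 {3..<d}" using assms by auto
  ultimately show ?thesis by simp
qed

lemma centre_tmat:
  assumes d: "d \<ge> 3" and f: "f \<in> centre d n"
  shows "f = tmat n (\<lambda>t. f (n - t) n :: 'a::field)"
proof -
  have fm: "f \<in> mats n" and fc: "\<And>u. (\<forall>j<d. u j \<in> vecs n) \<Longrightarrow>
       Theta d n (u(0 := mapply n f (u 0))) = Theta d n (u(1 := mapply n f (u 1)))"
    using f by (auto simp: centre_def)
  define D where "D = d - 3"
  have N: "(d-1)*n+1 = D*n + 2*n + 1" using d by (simp add: D_def algebra_simps)
  have key: "f a i0 = (if a \<le> i0 then f (n + a - i0) n else 0)" if a: "a \<in> {1..n}" and i0: "i0 \<in> {1..n}" for a i0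
  proof -
    define r where "r = n + 1 - a"
    define p where "p = (\<lambda>j::nat. if j = 0 then i0 else if j = 2 then r else n)"
    define u where "u = (\<lambda>j. e (p j) :: nat \<Rightarrow> 'a)"
    have pr: "p j \<in> {1..n}" for j using a i0 by (auto simp: p_def r_def)
    have uv: "\<forall>j<d. u j \<in> vecs n" using pr by (simp add: u_def e_vecs)
    have s3: "(\<Sum>j\<in>{3..<d}. p j) = D*n" by (simp add: p_def D_def)
    have s0: "(\<Sum>j\<in>{..<d}-{0}. p j) = n + r + D*n"
      using sum_split3[OF d, of 0 p] s3 by (simp add: p_def)
    have s1: "(\<Sum>j\<in>{..<d}-{1}. p j) = i0 + r + D*n"
      using sum_split3[OF d, of 1 p] s3 by (simp add: p_def)
    have "Theta d n (u(0 := mapply n f (u 0))) = (\<Sum>t\<in>{1..n}. if (\<Sum>j\<in>{..<d}-{0}. p j) + t = (d-1)*n+1 then mapply n f (u 0) t else 0)"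
    proof -
      have "ThetaM d n ((d-1)*n+1) (u(0 := mapply n f (u 0))) = (\<Sum>t\<in>{1..n}. if (\<Sum>j\<in>{..<d}-{0}. p j) + t = (d-1)*n+1 then (u(0 := mapply n f (u 0))) 0 t else 0)"
        by (rule eval) (use d pr in \<open>auto simp: u_def\<close>)
      then show ?thesis unfolding Theta_M by (simp only: fun_upd_same)
    qed
    also have "\<dots> = f a i0"
      unfolding s0 N sum_pick using a i0 by (auto simp: r_def u_def p_def mapply_e)
    finally have L: "Theta d n (u(0 := mapply n f (u 0))) = f a i0" .
    have "Theta d n (u(1 := mapply n f (u 1))) = (\<Sum>t\<in>{1..n}. if (\<Sum>j\<in>{..<d}-{1}. p j) + t = (d-1)*n+1 then mapply n f (u 1) t else 0)"
    proof -
      have "ThetaM d n ((d-1)*n+1) (u(1 := mapply n f (u 1))) = (\<Sum>t\<in>{1..n}. if (\<Sum>j\<in>{..<d}-{1}. p j) + t = (d-1)*n+1 then (u(1 := mapply n f (u 1))) 1 t else 0)"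
        by (rule eval) (use d pr in \<open>auto simp: u_def\<close>)
      then show ?thesis unfolding Theta_M by (simp only: fun_upd_same)
    qed
    also have "\<dots> = (if a \<le> i0 then f (n + a - i0) n else 0)"
      unfolding s1 N sum_pick using a i0 pr[of 1]
      by (auto simp: r_def u_def p_def mapply_e intro!: arg_cong[where f="\<lambda>x. f x n"])
    finally have R: "Theta d n (u(1 := mapply n f (u 1))) = (if a \<le> i0 then f (n + a - i0) n else 0)" .
    show ?thesis using fc[OF uv] L R by simp
  qed
  show ?thesis
  proof (intro ext)
    fix i j
    show "f i j = tmat n (\<lambda>t. f (n - t) n) i j"
    proof (cases "i \<in> {1..n} \<and> j \<in> {1..n}")
      case True
      then show ?thesis using key[of i j] by (auto simp: tmat_def intro!: arg_cong[where f="\<lambda>x. f x n"])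
    next
      case False
      then show ?thesis using fm by (auto simp: mats_def tmat_def)
    qed
  qed
qed


definition conv :: "(nat \<Rightarrow> 'a::field) \<Rightarrow> (nat \<Rightarrow> 'a) \<Rightarrow> nat \<Rightarrow> 'a" where
  "conv a b t = (\<Sum>s\<le>t. a s * b (t - s))"

lemma conv_comm: "conv a b = conv b a"
proof
  fix t
  show "conv a b t = conv b a t" unfolding conv_def
    by (rule sum.reindex_bij_witness[where j="\<lambda>s. t - s" and i="\<lambda>s. t - s"]) (auto simp: mult.commute)
qed

lemma tmat_mult: "mmult n (tmat n a) (tmat n b) = tmat n (conv a b)"
proof (intro ext)
  fix i k
  show "mmult n (tmat n a) (tmat n b) i k = tmat n (conv a b) i k"
  proof (cases "i \<in> {1..n} \<and> k \<in> {1..n}")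
    case False then show ?thesis by (auto simp: mmult_def tmat_def)
  next
    case True
    have "mmult n (tmat n a) (tmat n b) i k = (\<Sum>j\<in>{1..n}. if i \<le> j \<and> j \<le> k then a (j - i) * b (k - j) else 0)"
      using True by (auto simp: mmult_def tmat_def intro!: sum.cong)
    also have "\<dots> = (\<Sum>j\<in>{j\<in>{1..n}. i \<le> j \<and> j \<le> k}. a (j - i) * b (k - j))"
      by (rule sum.inter_filter[symmetric]) simp
    also have "\<dots> = tmat n (conv a b) i k"
    proof (cases "i \<le> k")
      case True': True
      have "(\<Sum>j\<in>{j\<in>{1..n}. i \<le> j \<and> j \<le> k}. a (j - i) * b (k - j)) = (\<Sum>s\<le>k-i. a s * b (k - i - s))"
        by (rule sum.reindex_bij_witness[where j="\<lambda>j. j - i" and i="\<lambda>s. i + s"]) (use True True' in auto)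
      then show ?thesis using True True' by (simp add: tmat_def conv_def)
    next
      case False
      then have e: "{j\<in>{1..n}. i \<le> j \<and> j \<le> k} = {}" by auto
      show ?thesis unfolding e using False by (simp add: tmat_def)
    qed
    finally show ?thesis .
  qed
qed

lemma commutant:
  assumes g: "g \<in> mats n"
    and c: "mmult n g (tmat n (\<lambda>t. if t = 1 then 1 else 0)) = mmult n (tmat n (\<lambda>t. if t = 1 then 1 else 0)) (g :: nat \<Rightarrow> nat \<Rightarrow> 'a::field)"
  shows "g = tmat n (\<lambda>t. g 1 (t + 1))"
proof -
  define P where "P = tmat n (\<lambda>t. if t = 1 then 1 else (0::'a))"
  have l: "mmult n g P i k = (if 2 \<le> k then g i (k - 1) else 0)" if "i \<in> {1..n}" "k \<in> {1..n}" for i k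
  proof -
    have "mmult n g P i k = (\<Sum>j\<in>{1..n}. g i j * P j k)" using that by (simp add: mmult_def)
    also have "\<dots> = (\<Sum>j\<in>{1..n}. if j = k - 1 then (if 2 \<le> k then g i j else 0) else 0)"
      by (rule sum.cong) (use that in \<open>auto simp: P_def tmat_def\<close>)
    also have "\<dots> = (if 2 \<le> k then g i (k - 1) else 0)" using that by auto
    finally show ?thesis .
  qed
  have r: "mmult n P g i k = (if i + 1 \<le> n then g (i + 1) k else 0)" if "i \<in> {1..n}" "k \<in> {1..n}" for i k
  proof -
    have "mmult n P g i k = (\<Sum>j\<in>{1..n}. P i j * g j k)" using that by (simp add: mmult_def)
    also have "\<dots> = (\<Sum>j\<in>{1..n}. if j = i + 1 then g j k else 0)"
      by (rule sum.cong) (use that in \<open>auto simp: P_def tmat_def\<close>)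
    also have "\<dots> = (if i + 1 \<le> n then g (i + 1) k else 0)" using that by auto
    finally show ?thesis .
  qed
  have rel: "(if 2 \<le> k then g i (k - 1) else 0) = (if i + 1 \<le> n then g (i + 1) k else 0)"
    if "i \<in> {1..n}" "k \<in> {1..n}" for i k
    using l[OF that] r[OF that] c by (simp add: P_def)
  have claim: "1 \<le> i \<longrightarrow> i \<le> n \<longrightarrow> (\<forall>j\<in>{1..n}. g i j = (if i \<le> j then g 1 (j - i + 1) else 0))" for i
  proof (induction i)
    case 0 then show ?case by simp
  next
    case (Suc i)
    show ?case
    proof (intro impI ballI)
      fix j assume h: "1 \<le> Suc i" "Suc i \<le> n" and j: "j \<in> {1..n}"
      show "g (Suc i) j = (if Suc i \<le> j then g 1 (j - Suc i + 1) else 0)"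
      proof (cases "i = 0")
        case True then show ?thesis using j by simp
      next
        case False
        note inz = False
        have ri: "(if 2 \<le> j then g i (j - 1) else 0) = g (Suc i) j" using rel[of i j] h j False by simp
        show ?thesis
        proof (cases "2 \<le> j")
          case False then show ?thesis using ri j inz by auto
        next
          case True
          have ih: "g i (j - 1) = (if i \<le> j - 1 then g 1 (j - 1 - i + 1) else 0)"
            using Suc.IH h inz j True by auto
          have iff: "i \<le> j - 1 \<longleftrightarrow> Suc i \<le> j" using True by arith
          show ?thesis
          proof (cases "Suc i \<le> j")
            case True2: True
            then have "g (Suc i) j = g 1 (j - 1 - i + 1)" using ri True ih iff by simp
            also have "\<dots> = g 1 (j - Suc i + 1)" by (rule arg_cong[where f="g 1"]) (use True2 in arith)
            finally show ?thesis using True2 by simp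
          next
            case False
            then show ?thesis using ri True ih iff by simp
          qed
        qed
      qed
    qed
  qed
  show ?thesis
  proof (intro ext)
    fix i j
    show "g i j = tmat n (\<lambda>t. g 1 (t + 1)) i j"
    proof (cases "i \<in> {1..n} \<and> j \<in> {1..n}")
      case True then show ?thesis using claim[of i] by (auto simp: tmat_def)
    next
      case False then show ?thesis using g by (auto simp: mats_def tmat_def)
    qed
  qed
qed


theorem lemma3p4:
  fixes d n :: nat
  assumes "d \<ge> 3" and "n \<ge> 1"
  shows "maximal_comm_subalgebra n (centre d n :: (nat \<Rightarrow> nat \<Rightarrow> 'a::{alg_closed_field, field_char_0}) set)"
proof -
  define T where "T = range (tmat n :: (nat \<Rightarrow> 'a) \<Rightarrow> _)"
  have CT: "centre d n = T"
  proof
    show "centre d n \<subseteq> T" unfolding T_def using centre_tmat[OF assms(1)] by blast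
    show "T \<subseteq> centre d n" unfolding T_def using tmat_in_centre[of d n] assms(1) by auto
  qed
  have mT: "T \<subseteq> mats n" by (auto simp: T_def mats_def tmat_def)
  have sub: "subalgebra n T"
    unfolding subalgebra_def
  proof (intro conjI ballI allI)
    show "T \<subseteq> mats n" by (rule mT)
    have "mone n = tmat n (\<lambda>t. if t = 0 then 1 else 0)"
      by (intro ext) (auto simp: mone_def tmat_def)
    then show "mone n \<in> T" unfolding T_def by (metis rangeI)
  next
    fix a b assume "a \<in> T" "b \<in> T"
    then obtain x y where xy: "a = tmat n x" "b = tmat n y" by (auto simp: T_def)
    have "(\<lambda>i j. a i j + b i j) = tmat n (\<lambda>t. x t + y t)" by (intro ext) (auto simp: xy tmat_def)
    then show "(\<lambda>i j. a i j + b i j) \<in> T" unfolding T_def by (metis rangeI)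
    show "mmult n a b \<in> T" unfolding xy tmat_mult T_def by (rule rangeI)
  next
    fix c a assume "a \<in> T"
    then obtain x where xy: "a = tmat n x" by (auto simp: T_def)
    have "(\<lambda>i j. c * a i j) = tmat n (\<lambda>t. c * x t)" by (intro ext) (auto simp: xy tmat_def)
    then show "(\<lambda>i j. c * a i j) \<in> T" unfolding T_def by (metis rangeI)
  qed
  have com: "commutative_set n T"
    unfolding commutative_set_def T_def by (auto simp: tmat_mult conv_comm)
  have max: "B = T" if B: "subalgebra n B" "commutative_set n B" "T \<subseteq> B" for B
  proof
    show "T \<subseteq> B" by (rule B(3))
    show "B \<subseteq> T"
    proof
      fix g assume g: "g \<in> B"
      have gm: "g \<in> mats n" using g B(1) by (auto simp: subalgebra_def)
      have "tmat n (\<lambda>t. if t = 1 then 1 else 0) \<in> B" using B(3) by (auto simp: T_def)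
      then have "mmult n g (tmat n (\<lambda>t. if t = 1 then 1 else 0)) = mmult n (tmat n (\<lambda>t. if t = 1 then 1 else 0)) g"
        using B(2) g by (auto simp: commutative_set_def)
      then have "g = tmat n (\<lambda>t. g 1 (t + 1))" by (rule commutant[OF gm])
      then show "g \<in> T" by (metis T_def rangeI)
    qed
  qed
  show ?thesis unfolding maximal_comm_subalgebra_def CT using sub com max by blast
qed

end
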